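(* Let $n,T$ be positive integers, let $\Theta\subseteq\mathbb{R}^n$ be a closed convex set, and let $c^*\in\Theta$. For $t=1,\dots,T$ let $X_t\subseteq\mathbb{R}^n$ be non-empty and compact, and assume the agent's action $x_t\in X_t$ satisfies $x_t\in\arg\max_{x\in X_t}\langle c^*,x\rangle$. Assume: the $\ell_2$-diameter of $\Theta$ is at most $D>0$; the $\ell_2$-diameter of each $X_t$ is at most $K>0$; and there is $B>0$ with $\max\{\langle c-c',x-x'\rangle : c,c'\in\Theta,\ x,x'\in X_t\}\le B$ for all $t$. Let $\hat c_1,\dots,\hat c_T\in\Theta$ be the outputs of Online Newton Step (ONS, described in the context) run on $\Theta$ with the loss functions $$\ell^\eta_t(c)\coloneqq -\eta\langle \hat c_t-c,\hat x_t-x_t\rangle+\eta^2\langle \hat c_t-c,\hat x_t-x_t\rangle^2\qquad (c\in\Theta),$$ where $\hat x_t\in\arg\max_{x\in X_t}\langle \hat c_t,x\rangle$ and $\eta=\frac{1}{5B}$. Then $$R^{c^*}_T\coloneqq\sum_{t=1}^T\langle c^*,x_t-\hat x_t\rangle\ \le\ \tilde R^{c^*}_T\coloneqq\sum_{t=1}^T\langle \hat c_t-c^*,\hat x_t-x_t\rangle\ =\ O\!\left(Bn\ln\!\left(\frac{DKT}{Bn}\right)\right),$$ where the $O$ hides an absolute constant.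
   Context: Online Newton Step (ONS) on a closed convex set $\mathcal{W}\subseteq\mathbb{R}^n$ of $\ell_2$-diameter at most $W$, applied to differentiable losses $q_1,\dots,q_T$, with parameter $\gamma>0$: set $\varepsilon=\frac{n}{W^2\gamma^2}$, $A_0=\varepsilon I_n$, pick any $w_1\in\mathcal{W}$; for $t=1,\dots,T$: play $w_t$, observe $q_t$, set $A_t=A_{t-1}+\nabla q_t(w_t)\nabla q_t(w_t)^\top$ and $w_{t+1}=\arg\min_{w\in\mathcal{W}}\|w_t-\frac1\gamma A_t^{-1}\nabla q_t(w_t)-w\|_{A_t}^2$, where $\|y\|_A=\sqrt{y^\top Ay}$. In this theorem $\mathcal{W}=\Theta$, $W=D$, $w_t=\hat c_t$, $q_t=\ell^\eta_t$ (note $\nabla\ell^\eta_t(c)=\eta(1-2\eta\langle\hat x_t-x_t,\hat c_t-c\rangle)(\hat x_t-x_t)$), and $\gamma=\frac{1}{(1+2\eta B)^2}=\frac{25}{49}$. The learner chooses $\hat c_t$ before observing $(X_t,x_t)$; after round $t$ it observes $(X_t,x_t)$. *)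

theory Defs
  imports "HOL-Analysis.Analysis"
begin

text \<open>Vectors of R^n are represented as functions nat => real that vanish outside
  the index set {..<n} (so that the dimension n can be quantified inside a formula,
  which is needed to state that the hidden constant is absolute, i.e. independent of n).
  Topological notions (closed, compact) refer to the product topology on nat => real,
  which on the closed subspace Rn n coincides with the Euclidean topology.
  Matrices are functions nat => nat => real, only entries with indices below n matter.\<close>

definition Rn :: "nat \<Rightarrow> (nat \<Rightarrow> real) set" where
  "Rn n = {v. \<forall>i\<ge>n. v i = 0}"

definition vadd :: "(nat \<Rightarrow> real) \<Rightarrow> (nat \<Rightarrow> real) \<Rightarrow> (nat \<Rightarrow> real)" where
  "vadd u v = (\<lambda>i. u i + v i)"

definition vsub :: "(nat \<Rightarrow> real) \<Rightarrow> (nat \<Rightarrow> real) \<Rightarrow> (nat \<Rightarrow> real)" where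
  "vsub u v = (\<lambda>i. u i - v i)"

definition vscale :: "real \<Rightarrow> (nat \<Rightarrow> real) \<Rightarrow> (nat \<Rightarrow> real)" where
  "vscale a v = (\<lambda>i. a * v i)"

definition ip :: "nat \<Rightarrow> (nat \<Rightarrow> real) \<Rightarrow> (nat \<Rightarrow> real) \<Rightarrow> real" where
  "ip n u v = (\<Sum>i<n. u i * v i)"

definition enorm :: "nat \<Rightarrow> (nat \<Rightarrow> real) \<Rightarrow> real" where
  "enorm n v = sqrt (ip n v v)"

definition convex_n :: "(nat \<Rightarrow> real) set \<Rightarrow> bool" where
  "convex_n S \<longleftrightarrow> (\<forall>u\<in>S. \<forall>v\<in>S. \<forall>a::real. 0 \<le> a \<and> a \<le> 1 \<longrightarrow>
      vadd (vscale a u) (vscale (1 - a) v) \<in> S)"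

definition diam_le :: "nat \<Rightarrow> (nat \<Rightarrow> real) set \<Rightarrow> real \<Rightarrow> bool" where
  "diam_le n S D \<longleftrightarrow> (\<forall>u\<in>S. \<forall>v\<in>S. enorm n (vsub u v) \<le> D)"

definition is_argmax :: "nat \<Rightarrow> (nat \<Rightarrow> real) \<Rightarrow> (nat \<Rightarrow> real) set \<Rightarrow> (nat \<Rightarrow> real) \<Rightarrow> bool" where
  "is_argmax n c X x \<longleftrightarrow> x \<in> X \<and> (\<forall>y\<in>X. ip n c y \<le> ip n c x)"

definition mvmul :: "nat \<Rightarrow> (nat \<Rightarrow> nat \<Rightarrow> real) \<Rightarrow> (nat \<Rightarrow> real) \<Rightarrow> (nat \<Rightarrow> real)" where
  "mvmul n A v = (\<lambda>i. if i < n then (\<Sum>j<n. A i j * v j) else 0)"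

definition anorm_sq :: "nat \<Rightarrow> (nat \<Rightarrow> nat \<Rightarrow> real) \<Rightarrow> (nat \<Rightarrow> real) \<Rightarrow> real" where
  "anorm_sq n A v = (\<Sum>i<n. \<Sum>j<n. v i * A i j * v j)"

definition ons_matrix :: "real \<Rightarrow> (nat \<Rightarrow> (nat \<Rightarrow> real)) \<Rightarrow> nat \<Rightarrow> (nat \<Rightarrow> nat \<Rightarrow> real)" where
  "ons_matrix eps g t = (\<lambda>i j. eps * (if i = j then 1 else 0) + (\<Sum>s\<in>{1..t}. g s i * g s j))"

text \<open>w is a run of Online Newton Step on the set Wset (diameter bound W) with
  parameter gamma, for rounds 1..T, where grad t c is the gradient of the loss q_t at c.
  A_t^{-1} g_t is written as the (unique, A_t being positive definite) vector z in R^n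
  with A_t z = g_t; the projection step says that w (t+1) is a minimiser over Wset of
  the squared A_t-norm distance to w_t - (1/gamma) A_t^{-1} g_t.\<close>
definition is_ONS_run ::
  "nat \<Rightarrow> (nat \<Rightarrow> real) set \<Rightarrow> real \<Rightarrow> real \<Rightarrow> (nat \<Rightarrow> (nat \<Rightarrow> real) \<Rightarrow> (nat \<Rightarrow> real))
     \<Rightarrow> nat \<Rightarrow> (nat \<Rightarrow> (nat \<Rightarrow> real)) \<Rightarrow> bool" where
  "is_ONS_run n Wset W gamma grad T w \<longleftrightarrow>
     (let eps = real n / (W\<^sup>2 * gamma\<^sup>2);
          g = (\<lambda>s. grad s (w s))
      in w 1 \<in> Wset \<and>
         (\<forall>t\<in>{1..T}. \<exists>z\<in>Rn n. mvmul n (ons_matrix eps g t) z = g t \<and>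
            (let y = vsub (w t) (vscale (1 / gamma) z)
             in w (t + 1) \<in> Wset \<and>
                (\<forall>v\<in>Wset. anorm_sq n (ons_matrix eps g t) (vsub y (w (t + 1)))
                            \<le> anorm_sq n (ons_matrix eps g t) (vsub y v)))))"

definition surr_loss ::
  "nat \<Rightarrow> real \<Rightarrow> (nat \<Rightarrow> real) \<Rightarrow> (nat \<Rightarrow> real) \<Rightarrow> (nat \<Rightarrow> real) \<Rightarrow> (nat \<Rightarrow> real) \<Rightarrow> real" where
  "surr_loss n eta chat xhat x c =
     - eta * ip n (vsub chat c) (vsub xhat x) + eta\<^sup>2 * (ip n (vsub chat c) (vsub xhat x))\<^sup>2"

definition surr_grad ::
  "nat \<Rightarrow> real \<Rightarrow> (nat \<Rightarrow> real) \<Rightarrow> (nat \<Rightarrow> real) \<Rightarrow> (nat \<Rightarrow> real) \<Rightarrow> (nat \<Rightarrow> real) \<Rightarrow> (nat \<Rightarrow> real)" where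
  "surr_grad n eta chat xhat x c =
     vscale (eta * (1 - 2 * eta * ip n (vsub xhat x) (vsub chat c))) (vsub xhat x)"

end

theory Submission
  imports Defs "Jordan_Normal_Form.Determinant"
begin


lemma det_lastcol:
  fixes R :: "real mat"
  assumes R: "R \<in> carrier_mat (Suc n) (Suc n)" and z: "\<And>i. i < n \<Longrightarrow> R $$ (i,n) = 0"
  shows "det R = R $$ (n,n) * det (mat n n (\<lambda>(i,j). R $$ (i,j)))"
proof -
  have "det R = (\<Sum>i<Suc n. R $$ (i,n) * cofactor R i n)"
    using laplace_expansion_column[OF R, of n] by simp
  also have "\<dots> = R $$ (n,n) * cofactor R n n"
    by (simp add: z)
  also have "cofactor R n n = det (mat_delete R n n)"
    by (simp add: cofactor_def)
  also have "mat_delete R n n = mat n n (\<lambda>(i,j). R $$ (i,j))"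
    using R by (intro eq_matI) (auto simp: mat_delete_def)
  finally show ?thesis .
qed

lemma det_unit_upper:
  fixes U :: "real mat"
  assumes U: "U \<in> carrier_mat m m" and ut: "\<And>i j. i < m \<Longrightarrow> j < i \<Longrightarrow> U $$ (i,j) = 0"
    and d: "\<And>i. i < m \<Longrightarrow> U $$ (i,i) = 1"
  shows "det U = 1"
proof -
  have "upper_triangular U" using U ut by (auto simp: upper_triangular_def)
  then have "det U = prod_list (diag_mat U)" using det_upper_triangular U by blast
  also have "diag_mat U = replicate m 1"
    using U d by (intro nth_equalityI) (auto simp: diag_mat_def)
  finally show ?thesis by simp
qed

definition blk :: "nat \<Rightarrow> (nat \<Rightarrow> nat \<Rightarrow> real) \<Rightarrow> (nat \<Rightarrow> real) \<Rightarrow> (nat \<Rightarrow> real) \<Rightarrow> real \<Rightarrow> real mat" where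
  "blk n M b c d = mat (Suc n) (Suc n) (\<lambda>(i,j). if i < n \<and> j < n then M i j else if i < n then b i
      else if j < n then c j else d)"

lemma sum_split_last: "(\<Sum>k<Suc n. f k) = (\<Sum>k<n. f k) + (f n :: real)"
  by simp

lemma blk_schur:
  assumes d: "d \<noteq> 0"
  shows "det (blk n M b c d) = d * det (mat n n (\<lambda>(i,j). M i j - b i * c j / d))"
proof -
  define L where "L = mat (Suc n) (Suc n) (\<lambda>(i,j). if i = j then 1 else if i < n \<and> j = n then b i / d else (0::real))"
  define R where "R = mat (Suc n) (Suc n) (\<lambda>(i,j). if i < n \<and> j < n then M i j - b i * c j / d
      else if i < n then 0 else if j < n then c j else d)"
  have L: "L \<in> carrier_mat (Suc n) (Suc n)" and R: "R \<in> carrier_mat (Suc n) (Suc n)"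
    by (auto simp: L_def R_def)
  have "blk n M b c d = L * R"
  proof (rule eq_matI)
    fix i j assume i: "i < dim_row (L * R)" and j: "j < dim_col (L * R)"
    then have i: "i < Suc n" and j: "j < Suc n" using L R by auto
    have "(L * R) $$ (i,j) = (\<Sum>k<Suc n. L $$ (i,k) * R $$ (k,j))"
      using i j L R by (simp add: scalar_prod_def atLeast0LessThan)
    also have "\<dots> = (\<Sum>k<n. L $$ (i,k) * R $$ (k,j)) + L $$ (i,n) * R $$ (n,j)"
      by (rule sum_split_last)
    also have "(\<Sum>k<n. L $$ (i,k) * R $$ (k,j)) = (if i < n then R $$ (i,j) else 0)"
    proof -
      have "(\<Sum>k<n. L $$ (i,k) * R $$ (k,j)) = (\<Sum>k<n. if k = i then R $$ (i,j) else 0)"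
        using i by (intro sum.cong) (auto simp: L_def)
      then show ?thesis by simp
    qed
    finally show "blk n M b c d $$ (i,j) = (L * R) $$ (i,j)"
      using i j d by (auto simp: blk_def L_def R_def)
  qed (auto simp: blk_def L_def R_def)
  then have "det (blk n M b c d) = det L * det R" using det_mult[OF L R] by simp
  also have "det L = 1" by (rule det_unit_upper[OF L]) (auto simp: L_def)
  also have "det R = d * det (mat n n (\<lambda>(i,j). R $$ (i,j)))"
    by (subst det_lastcol[OF R]) (auto simp: R_def)
  also have "mat n n (\<lambda>(i,j). R $$ (i,j)) = mat n n (\<lambda>(i,j). M i j - b i * c j / d)"
    by (intro eq_matI) (auto simp: R_def)
  finally show ?thesis by simp
qed

lemma blk_solve:
  assumes z: "\<And>i. i < n \<Longrightarrow> (\<Sum>j<n. M i j * z j) = b i"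
  shows "det (blk n M b c d) = (d - (\<Sum>j<n. c j * z j)) * det (mat n n (\<lambda>(i,j). M i j))"
proof -
  define U where "U = mat (Suc n) (Suc n) (\<lambda>(i,j). if i = j then 1 else if i < n \<and> j = n then z i else (0::real))"
  define R where "R = mat (Suc n) (Suc n) (\<lambda>(i,j). if i < n \<and> j < n then M i j
      else if i < n then 0 else if j < n then c j else d - (\<Sum>j<n. c j * z j))"
  have U: "U \<in> carrier_mat (Suc n) (Suc n)" and R: "R \<in> carrier_mat (Suc n) (Suc n)"
    by (auto simp: U_def R_def)
  have "blk n M b c d = R * U"
  proof (rule eq_matI)
    fix i j assume i: "i < dim_row (R * U)" and j: "j < dim_col (R * U)"
    then have i: "i < Suc n" and j: "j < Suc n" using U R by auto
    have "(R * U) $$ (i,j) = (\<Sum>k<Suc n. R $$ (i,k) * U $$ (k,j))"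
      using i j U R by (simp add: scalar_prod_def atLeast0LessThan)
    also have "\<dots> = (\<Sum>k<n. R $$ (i,k) * U $$ (k,j)) + R $$ (i,n) * U $$ (n,j)"
      by (rule sum_split_last)
    finally have e: "(R * U) $$ (i,j) = (\<Sum>k<n. R $$ (i,k) * U $$ (k,j)) + R $$ (i,n) * U $$ (n,j)" .
    show "blk n M b c d $$ (i,j) = (R * U) $$ (i,j)"
    proof (cases "j < n")
      case True
      have "(\<Sum>k<n. R $$ (i,k) * U $$ (k,j)) = (\<Sum>k<n. if k = j then R $$ (i,j) else 0)"
        using True i by (intro sum.cong) (auto simp: U_def)
      then show ?thesis using e True i by (auto simp: blk_def U_def R_def)
    next
      case False
      then have jn: "j = n" using j by auto
      have "(\<Sum>k<n. R $$ (i,k) * U $$ (k,j)) = (\<Sum>k<n. R $$ (i,k) * z k)"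
        using jn i by (intro sum.cong) (auto simp: U_def)
      also have "\<dots> = (if i < n then (\<Sum>k<n. M i k * z k) else (\<Sum>k<n. c k * z k))"
        using i by (auto simp: R_def intro!: sum.cong)
      finally show ?thesis using e jn i z by (auto simp: blk_def U_def R_def)
    qed
  qed (auto simp: blk_def U_def R_def)
  then have "det (blk n M b c d) = det R * det U" using det_mult[OF R U] by simp
  also have "det U = 1" by (rule det_unit_upper[OF U]) (auto simp: U_def)
  also have "det R = (d - (\<Sum>j<n. c j * z j)) * det (mat n n (\<lambda>(i,j). R $$ (i,j)))"
    by (subst det_lastcol[OF R]) (auto simp: R_def)
  also have "mat n n (\<lambda>(i,j). R $$ (i,j)) = mat n n (\<lambda>(i,j). M i j)"
    by (intro eq_matI) (auto simp: R_def)
  finally show ?thesis by simp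
qed

lemma sum_delta_mult: "(\<Sum>b<(n::nat). f b * (if b = i then 1 else 0)) = (if i < n then f i else (0::real))"
proof -
  have "(\<Sum>b<n. f b * (if b = i then 1 else 0)) = (\<Sum>b<n. if b = i then f i else 0)"
    by (intro sum.cong) auto
  also have "\<dots> = (if i \<in> {..<n} then f i else 0)"
    by (rule sum.delta) simp
  finally show ?thesis by simp
qed

lemma anorm_sq_delta:
  assumes "i < n"
  shows "anorm_sq n A (\<lambda>k. if k = i then 1 else 0) = A i i"
proof -
  have "anorm_sq n A (\<lambda>k. if k = i then 1 else 0)
      = (\<Sum>a<n. if a = i then (\<Sum>b<n. if b = i then A i i else 0) else 0)"
    unfolding anorm_sq_def by (intro sum.cong refl) (auto simp: sum_delta_mult assms)
  then show ?thesis using assms by simp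
qed

lemma schur_quad:
  fixes A :: "nat \<Rightarrow> nat \<Rightarrow> real" and x :: "nat \<Rightarrow> real"
  assumes sym: "\<And>i j. i < Suc n \<Longrightarrow> j < Suc n \<Longrightarrow> A i j = A j i" and d: "A n n \<noteq> 0"
  defines "p \<equiv> (\<Sum>j<n. A n j * x j)"
  shows "anorm_sq (Suc n) A (\<lambda>k. if k < n then x k else - p / A n n)
       = anorm_sq n (\<lambda>i j. A i j - A i n * A n j / A n n) x"
proof -
  define d where "d = A n n"
  define s where "s = - p / d"
  define y where "y = (\<lambda>k. if k < n then x k else s)"
  define Q where "Q = (\<Sum>i<n. \<Sum>j<n. x i * A i j * x j)"
  have p2: "(\<Sum>i<n. x i * A i n) = p"
    unfolding p_def using sym by (intro sum.cong) auto
  have "anorm_sq (Suc n) A y = (\<Sum>i<n. (\<Sum>j<n. y i * A i j * y j) + y i * A i n * y n)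
         + ((\<Sum>j<n. y n * A n j * y j) + y n * A n n * y n)"
    unfolding anorm_sq_def by simp
  also have "\<dots> = (\<Sum>i<n. (\<Sum>j<n. x i * A i j * x j) + x i * A i n * s)
         + ((\<Sum>j<n. s * A n j * x j) + s * d * s)"
    unfolding y_def d_def by simp
  also have "\<dots> = Q + s * (\<Sum>i<n. x i * A i n) + s * (\<Sum>j<n. A n j * x j) + s * d * s"
    unfolding Q_def by (simp add: sum.distrib sum_distrib_left algebra_simps)
  also have "\<dots> = Q - p * p / d"
    using d unfolding p2 p_def[symmetric] s_def d_def by (simp add: field_simps)
  finally have l: "anorm_sq (Suc n) A y = Q - p * p / d" .
  have "anorm_sq n (\<lambda>i j. A i j - A i n * A n j / A n n) x
      = (\<Sum>i<n. \<Sum>j<n. x i * A i j * x j - (x i * A i n) * (A n j * x j) / d)"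
    unfolding anorm_sq_def d_def by (intro sum.cong refl) (simp add: algebra_simps)
  also have "\<dots> = Q - (\<Sum>i<n. x i * A i n) * (\<Sum>j<n. A n j * x j) / d"
    unfolding Q_def by (simp add: sum_subtractf sum_divide_distrib sum_product)
  also have "\<dots> = Q - p * p / d" using p2 p_def by simp
  finally show ?thesis using l unfolding y_def s_def d_def by simp
qed

lemma hadamard:
  fixes A :: "nat \<Rightarrow> nat \<Rightarrow> real"
  assumes "\<And>i j. i < n \<Longrightarrow> j < n \<Longrightarrow> A i j = A j i"
    and "\<And>x. (\<exists>i<n. x i \<noteq> 0) \<Longrightarrow> 0 < anorm_sq n A x"
  shows "0 < det (mat n n (\<lambda>(i,j). A i j)) \<and> det (mat n n (\<lambda>(i,j). A i j)) \<le> (\<Prod>i<n. A i i)"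
  using assms
proof (induction n arbitrary: A)
  case 0
  have "det (mat 0 0 (\<lambda>(i,j). A i j)) = 1" by (rule det_dim_zero) auto
  then show ?case by simp
next
  case (Suc n)
  define d where "d = A n n"
  have dpos: "0 < d" using Suc.prems(2)[of "\<lambda>k. if k = n then 1 else 0"] anorm_sq_delta[of n "Suc n" A]
    by (simp add: d_def)
  define S where "S = (\<lambda>i j. A i j - A i n * A n j / A n n)"
  have m: "mat (Suc n) (Suc n) (\<lambda>(i,j). A i j) = blk n A (\<lambda>i. A i n) (\<lambda>j. A n j) d"
    by (intro eq_matI) (auto simp: blk_def d_def less_Suc_eq)
  have detA: "det (mat (Suc n) (Suc n) (\<lambda>(i,j). A i j)) = d * det (mat n n (\<lambda>(i,j). S i j))"
    unfolding m using dpos by (simp add: blk_schur S_def d_def)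
  have Ssym: "\<And>i j. i < n \<Longrightarrow> j < n \<Longrightarrow> S i j = S j i"
    unfolding S_def using Suc.prems(1) by (simp add: mult.commute)
  have Spd: "0 < anorm_sq n S x" if x: "\<exists>i<n. x i \<noteq> 0" for x
  proof -
    define p where "p = (\<Sum>j<n. A n j * x j)"
    have "anorm_sq n S x = anorm_sq (Suc n) A (\<lambda>k. if k < n then x k else - p / A n n)"
      unfolding S_def p_def using schur_quad[of n A x] Suc.prems(1) dpos d_def by simp
    also have "0 < \<dots>" using x by (intro Suc.prems(2)) auto
    finally show ?thesis .
  qed
  have IH: "0 < det (mat n n (\<lambda>(i,j). S i j)) \<and> det (mat n n (\<lambda>(i,j). S i j)) \<le> (\<Prod>i<n. S i i)"
    using Suc.IH[of S] Ssym Spd by blast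
  have "(\<Prod>i<n. S i i) \<le> (\<Prod>i<n. A i i)"
  proof (rule prod_mono)
    fix i assume i: "i \<in> {..<n}"
    have "0 < S i i" using Spd[of "\<lambda>k. if k = i then 1 else 0"] anorm_sq_delta[of i n S] i by auto
    moreover have "S i i \<le> A i i"
      unfolding S_def using dpos Suc.prems(1)[of i n] i by (simp add: d_def[symmetric] flip: power2_eq_square)
    ultimately show "0 \<le> S i i \<and> S i i \<le> A i i" by simp
  qed
  then show ?case using IH dpos detA
    by (simp add: d_def mult_left_mono mult.commute)
qed



definition bf :: "nat \<Rightarrow> (nat \<Rightarrow> nat \<Rightarrow> real) \<Rightarrow> (nat \<Rightarrow> real) \<Rightarrow> (nat \<Rightarrow> real) \<Rightarrow> real" where
  "bf n A p q = (\<Sum>i<n. \<Sum>j<n. p i * A i j * q j)"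

definition symm :: "nat \<Rightarrow> (nat \<Rightarrow> nat \<Rightarrow> real) \<Rightarrow> bool" where
  "symm n A \<longleftrightarrow> (\<forall>i<n. \<forall>j<n. A i j = A j i)"

lemma anorm_bf: "anorm_sq n A v = bf n A v v"
  by (simp add: anorm_sq_def bf_def)

lemma bf_sym:
  assumes "symm n A"
  shows "bf n A p q = bf n A q p"
proof -
  have "bf n A p q = (\<Sum>j<n. \<Sum>i<n. p i * A i j * q j)"
    unfolding bf_def by (rule sum.swap)
  also have "\<dots> = bf n A q p"
    unfolding bf_def
  proof (intro sum.cong refl)
    fix i j assume "i \<in> {..<n}" "j \<in> {..<n}"
    then show "p j * A j i * q i = q i * A i j * p j" using assms by (simp add: symm_def)
  qed
  finally show ?thesis .
qed

lemma bf_lin_left: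
  "bf n A (\<lambda>i. a * p i + b * q i) r = a * bf n A p r + b * bf n A q r"
  unfolding bf_def by (simp add: algebra_simps sum.distrib sum_distrib_left)

lemma bf_lin_right:
  "bf n A r (\<lambda>i. a * p i + b * q i) = a * bf n A r p + b * bf n A r q"
  unfolding bf_def by (simp add: algebra_simps sum.distrib sum_distrib_left)

lemma bf_expand:
  assumes sym: "symm n A"
  shows "bf n A (\<lambda>i. p i - s * q i) (\<lambda>i. p i - s * q i)
     = bf n A p p - 2 * s * bf n A p q + s\<^sup>2 * bf n A q q"
proof -
  have e: "(\<lambda>i. p i - s * q i) = (\<lambda>i. 1 * p i + (- s) * q i)" by auto
  show ?thesis unfolding e bf_lin_left bf_lin_right using bf_sym[OF sym, where p=q and q=p]
    by (simp add: algebra_simps power2_eq_square)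
qed

lemma bf_solve:
  assumes sym: "symm n A"
    and z: "\<And>i. i < n \<Longrightarrow> (\<Sum>j<n. A i j * z j) = g i"
  shows "bf n A z v = ip n g v"
proof -
  have "bf n A z v = (\<Sum>j<n. \<Sum>i<n. z i * A i j * v j)"
    unfolding bf_def by (rule sum.swap)
  also have "\<dots> = (\<Sum>j<n. (\<Sum>i<n. A j i * z i) * v j)"
  proof (intro sum.cong refl)
    fix j assume j: "j \<in> {..<n}"
    have "(\<Sum>i<n. A j i * z i) * v j = (\<Sum>i<n. A j i * z i * v j)"
      by (simp add: sum_distrib_right)
    also have "\<dots> = (\<Sum>i<n. z i * A i j * v j)"
    proof (intro sum.cong refl)
      fix i assume "i \<in> {..<n}"
      then show "A j i * z i * v j = z i * A i j * v j" using j sym by (simp add: symm_def)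
    qed
    finally show "(\<Sum>i<n. z i * A i j * v j) = (\<Sum>i<n. A j i * z i) * v j" by simp
  qed
  also have "\<dots> = ip n g v" unfolding ip_def using z by simp
  finally show ?thesis .
qed

lemma proj_pyth:
  assumes sym: "symm n A"
    and psd: "\<And>v. 0 \<le> anorm_sq n A v"
    and cvx: "convex_n Th" and w': "w' \<in> Th" and u: "u \<in> Th"
    and mn: "\<forall>v\<in>Th. anorm_sq n A (vsub y w') \<le> anorm_sq n A (vsub y v)"
  shows "anorm_sq n A (vsub w' u) \<le> anorm_sq n A (vsub y u)"
proof -
  define p where "p = vsub y w'"
  define q where "q = vsub u w'"
  have key: "2 * bf n A p q \<le> s * bf n A q q" if s: "0 < s" "s \<le> 1" for s
  proof -
    have vs: "vadd (vscale s u) (vscale (1 - s) w') \<in> Th"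
      using cvx u w' s unfolding convex_n_def by auto
    have e: "vsub y (vadd (vscale s u) (vscale (1 - s) w')) = (\<lambda>i. p i - s * q i)"
      unfolding p_def q_def vsub_def vadd_def vscale_def by (auto simp: algebra_simps)
    have "bf n A p p \<le> bf n A (vsub y (vadd (vscale s u) (vscale (1 - s) w'))) (vsub y (vadd (vscale s u) (vscale (1 - s) w')))"
      using mn vs unfolding anorm_bf p_def by blast
    then have "bf n A p p \<le> bf n A (\<lambda>i. p i - s * q i) (\<lambda>i. p i - s * q i)"
      unfolding e .
    then have "bf n A p p \<le> bf n A p p - 2 * s * bf n A p q + s\<^sup>2 * bf n A q q"
      using bf_expand[OF sym, where p=p and s=s and q=q] by linarith
    then have "s * (2 * bf n A p q) \<le> s * (s * bf n A q q)"
      by (simp add: algebra_simps power2_eq_square)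
    then show ?thesis using s by simp
  qed
  have qq: "0 \<le> bf n A q q" using psd[of q] by (simp add: anorm_bf)
  have pq: "bf n A p q \<le> 0"
  proof (rule ccontr)
    assume "\<not> ?thesis"
    then have pos: "0 < bf n A p q" by simp
    define s where "s = min 1 (bf n A p q / (bf n A q q + 1))"
    have s0: "0 < s" "s \<le> 1" using pos qq by (auto simp: s_def)
    have "s * bf n A q q \<le> (bf n A p q / (bf n A q q + 1)) * bf n A q q"
      using qq by (intro mult_right_mono) (auto simp: s_def)
    also have "\<dots> \<le> bf n A p q"
      using qq pos by (simp add: field_simps)
    finally show False using key[OF s0] pos by simp
  qed
  have pp: "0 \<le> bf n A p p" using psd[of p] by (simp add: anorm_bf)
  have e1: "vsub y u = (\<lambda>i. p i - 1 * q i)"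
    unfolding p_def q_def vsub_def by auto
  have e2: "vsub w' u = (\<lambda>i. 0 - 1 * q i)"
    unfolding q_def vsub_def by auto
  have "anorm_sq n A (vsub w' u) = bf n A q q"
    unfolding anorm_bf e2 bf_expand[OF sym] by (simp add: bf_def)
  also have "\<dots> \<le> bf n A p p - 2 * 1 * bf n A p q + 1\<^sup>2 * bf n A q q"
    using pq pp by simp
  also have "\<dots> = anorm_sq n A (vsub y u)"
    unfolding anorm_bf e1 bf_expand[OF sym] ..
  finally show ?thesis .
qed

lemma ons_step:
  assumes sym: "symm n A"
    and psd: "\<And>v. 0 \<le> anorm_sq n A v"
    and cvx: "convex_n Th" and w': "w' \<in> Th" and u: "u \<in> Th"
    and z: "\<And>i. i < n \<Longrightarrow> (\<Sum>j<n. A i j * z j) = g i"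
    and gam: "0 < gam"
    and mn: "\<forall>v\<in>Th. anorm_sq n A (vsub (vsub w (vscale (1 / gam) z)) w')
                 \<le> anorm_sq n A (vsub (vsub w (vscale (1 / gam) z)) v)"
  shows "anorm_sq n A (vsub w' u) \<le> anorm_sq n A (vsub w u) - (2 / gam) * ip n g (vsub w u)
            + (1 / gam\<^sup>2) * ip n g z"
proof -
  have "anorm_sq n A (vsub w' u) \<le> anorm_sq n A (vsub (vsub w (vscale (1 / gam) z)) u)"
    by (rule proj_pyth[OF sym psd cvx w' u mn])
  also have "vsub (vsub w (vscale (1 / gam) z)) u = (\<lambda>i. vsub w u i - (1 / gam) * z i)"
    unfolding vsub_def vscale_def by auto
  also have "anorm_sq n A \<dots> = anorm_sq n A (vsub w u) - 2 * (1 / gam) * bf n A (vsub w u) z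
       + (1 / gam)\<^sup>2 * bf n A z z"
    unfolding anorm_bf by (rule bf_expand[OF sym])
  also have "bf n A (vsub w u) z = ip n g (vsub w u)"
    using bf_sym[OF sym] bf_solve[OF sym z] by metis
  also have "bf n A z z = ip n g z"
    using bf_solve[OF sym z] by metis
  finally show ?thesis by (simp add: power_divide)
qed



lemma ip_comm: "ip n u v = ip n v u"
  unfolding ip_def by (simp add: mult.commute)

lemma ip_vsub_left: "ip n (vsub u v) w = ip n u w - ip n v w"
  unfolding ip_def vsub_def by (simp add: algebra_simps sum_subtractf)

lemma ip_vsub_right: "ip n w (vsub u v) = ip n w u - ip n w v"
  unfolding ip_def vsub_def by (simp add: algebra_simps sum_subtractf)

lemma ip_vscale_left: "ip n (vscale a u) w = a * ip n u w"
  unfolding ip_def vscale_def by (simp add: algebra_simps sum_distrib_left)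

lemma ip_self_nonneg: "0 \<le> ip n v v"
  unfolding ip_def by (auto intro: sum_nonneg)

lemma ip_le_sq:
  assumes "enorm n v \<le> K"
  shows "ip n v v \<le> K\<^sup>2"
proof -
  have "sqrt (ip n v v) \<le> K" using assms by (simp add: enorm_def)
  moreover have "0 \<le> sqrt (ip n v v)" using ip_self_nonneg[of n v] by simp
  ultimately have "(sqrt (ip n v v))\<^sup>2 \<le> K\<^sup>2" by (rule power_mono)
  moreover have "(sqrt (ip n v v))\<^sup>2 = ip n v v" using ip_self_nonneg[of n v] by simp
  ultimately show ?thesis by simp
qed

lemma ons_symm: "symm n (ons_matrix eps g t)"
  unfolding symm_def ons_matrix_def by (auto simp: mult.commute)

lemma ons_quad:
  "anorm_sq n (ons_matrix eps g t) v = eps * ip n v v + (\<Sum>s\<in>{1..t}. (ip n (g s) v)\<^sup>2)"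
proof -
  have "anorm_sq n (ons_matrix eps g t) v
      = (\<Sum>i<n. \<Sum>j<n. eps * (v i * (if i = j then 1 else 0) * v j))
        + (\<Sum>i<n. \<Sum>j<n. \<Sum>s\<in>{1..t}. (g s i * v i) * (g s j * v j))"
    unfolding anorm_sq_def ons_matrix_def
    by (simp add: sum.distrib[symmetric] sum_distrib_left sum_distrib_right algebra_simps)
  also have "(\<Sum>i<n. \<Sum>j<n. eps * (v i * (if i = j then 1 else 0) * v j)) = eps * ip n v v"
  proof -
    have "(\<Sum>i<n. \<Sum>j<n. eps * (v i * (if i = j then 1 else 0) * v j)) = (\<Sum>i<n. eps * (v i * v i))"
    proof (intro sum.cong refl)
      fix i assume i: "i \<in> {..<n}"
      have "(\<Sum>j<n. eps * (v i * (if i = j then 1 else 0) * v j)) = (\<Sum>j<n. if j = i then eps * (v i * v i) else 0)"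
        by (intro sum.cong) auto
      also have "\<dots> = eps * (v i * v i)" using i by simp
      finally show "(\<Sum>j<n. eps * (v i * (if i = j then 1 else 0) * v j)) = eps * (v i * v i)" .
    qed
    then show ?thesis by (simp add: ip_def sum_distrib_left)
  qed
  also have "(\<Sum>i<n. \<Sum>j<n. \<Sum>s\<in>{1..t}. (g s i * v i) * (g s j * v j)) = (\<Sum>s\<in>{1..t}. (ip n (g s) v)\<^sup>2)"
  proof -
    have "(\<Sum>i<n. \<Sum>j<n. \<Sum>s\<in>{1..t}. (g s i * v i) * (g s j * v j))
        = (\<Sum>i<n. \<Sum>s\<in>{1..t}. \<Sum>j<n. (g s i * v i) * (g s j * v j))"
      by (rule sum.cong[OF refl], rule sum.swap)
    also have "\<dots> = (\<Sum>s\<in>{1..t}. \<Sum>i<n. \<Sum>j<n. (g s i * v i) * (g s j * v j))"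
      by (rule sum.swap)
    also have "\<dots> = (\<Sum>s\<in>{1..t}. (ip n (g s) v)\<^sup>2)"
      by (simp add: ip_def power2_eq_square sum_product)
    finally show ?thesis .
  qed
  finally show ?thesis .
qed

lemma ons_quad_step:
  assumes "1 \<le> t"
  shows "anorm_sq n (ons_matrix eps g t) v = anorm_sq n (ons_matrix eps g (t - 1)) v + (ip n (g t) v)\<^sup>2"
proof -
  have "{1..t} = insert t {1..t-1}" and "t \<notin> {1..t-1}" using assms by auto
  then show ?thesis unfolding ons_quad by simp
qed

lemma ons_pd:
  assumes eps: "0 < eps" and v: "\<exists>i<n. v i \<noteq> 0"
  shows "0 < anorm_sq n (ons_matrix eps g t) v"
proof -
  obtain i where i: "i < n" "v i \<noteq> 0" using v by blast
  have "0 < ip n v v" unfolding ip_def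
    using i by (intro sum_pos2[of _ i]) (auto simp: zero_less_mult_iff)
  then show ?thesis unfolding ons_quad using eps by (intro add_pos_nonneg) (auto intro: sum_nonneg)
qed

lemma ons_psd:
  assumes eps: "0 \<le> eps"
  shows "0 \<le> anorm_sq n (ons_matrix eps g t) v"
  unfolding ons_quad using eps ip_self_nonneg[of n v] by (intro add_nonneg_nonneg) (auto intro: sum_nonneg)

lemma ons_diag_sum:
  "(\<Sum>i<n. ons_matrix eps g t i i) = real n * eps + (\<Sum>s\<in>{1..t}. ip n (g s) (g s))"
  unfolding ons_matrix_def ip_def by (simp add: sum.distrib) (rule sum.swap)

lemma ons_rank1:
  assumes "1 \<le> t"
  shows "ons_matrix eps g t i j - g t i * g t j / 1 = ons_matrix eps g (t - 1) i j"
proof -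
  have "{1..t} = insert t {1..t-1}" and "t \<notin> {1..t-1}" using assms by auto
  then show ?thesis unfolding ons_matrix_def by simp
qed

definition Mt :: "nat \<Rightarrow> real \<Rightarrow> (nat \<Rightarrow> nat \<Rightarrow> real) \<Rightarrow> nat \<Rightarrow> real mat" where
  "Mt n eps g t = mat n n (\<lambda>(i,j). ons_matrix eps (\<lambda>s i. g s i) t i j)"

lemma det_Mt_pos_le:
  assumes "0 < eps"
  shows "0 < det (Mt n eps g t) \<and> det (Mt n eps g t) \<le> (\<Prod>i<n. ons_matrix eps (\<lambda>s i. g s i) t i i)"
  unfolding Mt_def
  by (rule hadamard) (use ons_symm[unfolded symm_def] ons_pd[OF assms] in auto)

lemma det_step:
  assumes "1 \<le> t" and z: "\<And>i. i < n \<Longrightarrow> (\<Sum>j<n. ons_matrix eps g t i j * z j) = g t i"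
  shows "det (Mt n eps g (t - 1)) = (1 - ip n (g t) z) * det (Mt n eps g t)"
proof -
  have "det (blk n (ons_matrix eps g t) (g t) (g t) 1) = (1 - (\<Sum>j<n. g t j * z j)) * det (Mt n eps g t)"
    unfolding Mt_def using blk_solve[of n "ons_matrix eps g t" z "g t" "g t" 1] z by simp
  moreover have "det (blk n (ons_matrix eps g t) (g t) (g t) 1) = det (Mt n eps g (t - 1))"
    unfolding Mt_def using blk_schur[of 1 n "ons_matrix eps g t" "g t" "g t"] ons_rank1[OF assms(1)]
    by simp
  ultimately show ?thesis by (simp add: ip_def)
qed

lemma det_M0: "det (Mt n eps g 0) = eps ^ n"
proof -
  have "Mt n eps g 0 = eps \<cdot>\<^sub>m 1\<^sub>m n"
    unfolding Mt_def ons_matrix_def by (intro eq_matI) auto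
  then show ?thesis by simp
qed

lemma tele:
  fixes c F :: "nat \<Rightarrow> real"
  assumes "\<And>t. t \<in> {1..T} \<Longrightarrow> c t \<le> F (t - 1) - F t"
  shows "(\<Sum>t\<in>{1..T}. c t) \<le> F 0 - F T"
  using assms
proof (induction T)
  case 0 then show ?case by simp
next
  case (Suc T)
  have "(\<Sum>t\<in>{1..T}. c t) \<le> F 0 - F T" using Suc by auto
  moreover have "c (Suc T) \<le> F T - F (Suc T)" using Suc.prems[of "Suc T"] by simp
  ultimately show ?case by simp
qed

lemma sum_ln_le:
  fixes a :: "nat \<Rightarrow> real"
  assumes pos: "\<And>i. i < n \<Longrightarrow> 0 < a i" and n: "1 \<le> n"
  shows "(\<Sum>i<n. ln (a i)) \<le> real n * ln ((\<Sum>i<n. a i) / real n)"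
proof -
  define m where "m = (\<Sum>i<n. a i) / real n"
  have S: "0 < (\<Sum>i<n. a i)" using pos n by (intro sum_pos) (auto simp: lessThan_empty_iff)
  then have m: "0 < m" using n by (simp add: m_def)
  have "ln (a i) \<le> ln m + (a i / m - 1)" if i: "i < n" for i
  proof -
    have "ln (a i / m) \<le> a i / m - 1" using pos[OF i] m by (intro ln_le_minus_one) simp
    then show ?thesis using pos[OF i] m by (simp add: ln_div)
  qed
  then have "(\<Sum>i<n. ln (a i)) \<le> (\<Sum>i<n. ln m + (a i / m - 1))" by (intro sum_mono) auto
  also have "\<dots> = real n * ln m + (\<Sum>i<n. a i) / m - real n"
    by (simp add: sum.distrib sum_subtractf sum_divide_distrib)
  also have "(\<Sum>i<n. a i) / m = real n" using S n by (simp add: m_def)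
  finally show ?thesis by (simp add: m_def)
qed



lemma main_lemma:
  fixes n T :: nat and Th :: "(nat \<Rightarrow> real) set" and cstar :: "nat \<Rightarrow> real"
    and X :: "nat \<Rightarrow> (nat \<Rightarrow> real) set" and x :: "nat \<Rightarrow> (nat \<Rightarrow> real)"
    and D K B :: real and chat xhat :: "nat \<Rightarrow> (nat \<Rightarrow> real)"
  assumes n1: "n \<ge> 1" and T1: "T \<ge> 1" and ThR: "Th \<subseteq> Rn n" and cl: "closed Th"
    and cvx: "convex_n Th" and cs: "cstar \<in> Th" and D0: "D > 0" and K0: "K > 0" and B0: "B > 0"
    and diamTh: "diam_le n Th D"
    and Xh: "\<forall>t\<in>{1..T}. X t \<subseteq> Rn n \<and> X t \<noteq> {} \<and> compact (X t) \<and>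
          diam_le n (X t) K \<and> is_argmax n cstar (X t) (x t) \<and>
          (\<forall>c\<in>Th. \<forall>c'\<in>Th. \<forall>y\<in>X t. \<forall>y'\<in>X t. ip n (vsub c c') (vsub y y') \<le> B)"
    and xh: "\<forall>t\<in>{1..T}. is_argmax n (chat t) (X t) (xhat t)"
    and ons: "is_ONS_run n Th D (25 / 49)
         (\<lambda>t. surr_grad n (1 / (5 * B)) (chat t) (xhat t) (x t)) T chat"
  shows "(\<Sum>t\<in>{1..T}. ip n cstar (vsub (x t) (xhat t)))
          \<le> (\<Sum>t\<in>{1..T}. ip n (vsub (chat t) cstar) (vsub (xhat t) (x t))) \<and>
       (exp 1 \<le> D * K * real T / (B * real n) \<longrightarrow>
          (\<Sum>t\<in>{1..T}. ip n (vsub (chat t) cstar) (vsub (xhat t) (x t)))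
            \<le> 40 * B * real n * ln (D * K * real T / (B * real n)))"
proof -
  define eta where "eta = 1 / (5 * B)"
  define gam where "gam = (25 / 49 :: real)"
  define eps where "eps = real n / (D\<^sup>2 * gam\<^sup>2)"
  define G where "G = (\<lambda>s. surr_grad n eta (chat s) (xhat s) (x s) (chat s))"
  define d where "d = (\<lambda>s. vsub (xhat s) (x s))"
  define A where "A = (\<lambda>t. ons_matrix eps G t)"
  define a where "a = (\<lambda>t. ip n (vsub (chat t) cstar) (d t))"
  have eta0: "0 < eta" using B0 by (simp add: eta_def)
  have gam0: "0 < gam" by (simp add: gam_def)
  have eps0: "0 < eps" using n1 D0 by (simp add: eps_def gam_def)
  have Gd: "G s = vscale eta (d s)" for s
    unfolding G_def surr_grad_def d_def by (simp add: vsub_def ip_def)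
  have ONS: "chat 1 \<in> Th \<and> (\<forall>t\<in>{1..T}. \<exists>z\<in>Rn n. mvmul n (A t) z = G t \<and> chat (t + 1) \<in> Th \<and>
      (\<forall>v\<in>Th. anorm_sq n (A t) (vsub (vsub (chat t) (vscale (1 / gam) z)) (chat (t + 1)))
             \<le> anorm_sq n (A t) (vsub (vsub (chat t) (vscale (1 / gam) z)) v)))"
    using ons unfolding is_ONS_run_def Let_def A_def eps_def G_def gam_def eta_def by simp
  then have "\<forall>t\<in>{1..T}. \<exists>z. mvmul n (A t) z = G t \<and> chat (t + 1) \<in> Th \<and>
      (\<forall>v\<in>Th. anorm_sq n (A t) (vsub (vsub (chat t) (vscale (1 / gam) z)) (chat (t + 1)))
             \<le> anorm_sq n (A t) (vsub (vsub (chat t) (vscale (1 / gam) z)) v))" by blast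
  then have "\<exists>zf. \<forall>t\<in>{1..T}. mvmul n (A t) (zf t) = G t \<and> chat (t + 1) \<in> Th \<and>
      (\<forall>v\<in>Th. anorm_sq n (A t) (vsub (vsub (chat t) (vscale (1 / gam) (zf t))) (chat (t + 1)))
             \<le> anorm_sq n (A t) (vsub (vsub (chat t) (vscale (1 / gam) (zf t))) v))" by (rule bchoice)
  then obtain zf where zf: "\<forall>t\<in>{1..T}. mvmul n (A t) (zf t) = G t \<and> chat (t + 1) \<in> Th \<and>
      (\<forall>v\<in>Th. anorm_sq n (A t) (vsub (vsub (chat t) (vscale (1 / gam) (zf t))) (chat (t + 1)))
             \<le> anorm_sq n (A t) (vsub (vsub (chat t) (vscale (1 / gam) (zf t))) v))" by blast
  have chTh: "chat t \<in> Th" if t: "1 \<le> t" "t \<le> Suc T" for t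
  proof (cases "t = 1")
    case True then show ?thesis using ONS by simp
  next
    case False
    then have "t - 1 \<in> {1..T}" "t = (t - 1) + 1" using t by auto
    then show ?thesis using zf by metis
  qed
  have zeq: "(\<Sum>j<n. A t i j * zf t j) = G t i" if t: "t \<in> {1..T}" and i: "i < n" for t i
  proof -
    have "mvmul n (A t) (zf t) i = G t i" using zf t by simp
    then show ?thesis using i by (simp add: mvmul_def)
  qed
  have rf: "ip n cstar (vsub (x t) (xhat t)) \<le> a t \<and> 0 \<le> a t \<and> a t \<le> B \<and> ip n (d t) (d t) \<le> K\<^sup>2"
    if t: "t \<in> {1..T}" for t
  proof -
    have Xt: "diam_le n (X t) K" "is_argmax n cstar (X t) (x t)"
      "\<forall>c\<in>Th. \<forall>c'\<in>Th. \<forall>y\<in>X t. \<forall>y'\<in>X t. ip n (vsub c c') (vsub y y') \<le> B"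
      using Xh t by auto
    have xt: "x t \<in> X t" "ip n cstar (xhat t) \<le> ip n cstar (x t)"
      and xht: "xhat t \<in> X t" "ip n (chat t) (x t) \<le> ip n (chat t) (xhat t)"
      using Xt(2) xh t unfolding is_argmax_def by auto
    have ct: "chat t \<in> Th" using chTh t by auto
    have ae: "a t = (ip n (chat t) (xhat t) - ip n (chat t) (x t)) + (ip n cstar (x t) - ip n cstar (xhat t))"
      unfolding a_def d_def ip_vsub_left ip_vsub_right by simp
    have e1: "ip n cstar (vsub (x t) (xhat t)) = ip n cstar (x t) - ip n cstar (xhat t)"
      by (simp add: ip_vsub_right)
    have "a t \<le> B" using Xt(3) ct cs xt(1) xht(1) unfolding a_def d_def by blast
    moreover have "ip n (d t) (d t) \<le> K\<^sup>2"
      using Xt(1) xt(1) xht(1) unfolding diam_le_def d_def by (intro ip_le_sq) blast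
    ultimately show ?thesis using ae e1 xt xht by simp
  qed
  have part1: "(\<Sum>t\<in>{1..T}. ip n cstar (vsub (x t) (xhat t))) \<le> (\<Sum>t\<in>{1..T}. a t)"
    using rf by (intro sum_mono) auto
  have aeq: "(\<Sum>t\<in>{1..T}. ip n (vsub (chat t) cstar) (vsub (xhat t) (x t))) = (\<Sum>t\<in>{1..T}. a t)"
    by (simp add: a_def d_def)
  have part2: "(\<Sum>t\<in>{1..T}. a t) \<le> 40 * B * real n * ln (D * K * real T / (B * real n))"
    if Z: "exp 1 \<le> D * K * real T / (B * real n)"
  proof -
    define b where "b = (\<lambda>t. eta * a t)"
    define r where "r = (\<lambda>t. ip n (G t) (zf t))"
    define F where "F = (\<lambda>t. anorm_sq n (A t) (vsub (chat (Suc t)) cstar))"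
    have bb: "0 \<le> b t \<and> b t \<le> 1 / 5" if t: "t \<in> {1..T}" for t
    proof -
      have "0 \<le> a t" "a t \<le> B" using rf[OF t] by auto
      then have "eta * a t \<le> eta * B" "0 \<le> eta * a t" using eta0 by (auto intro: mult_left_mono)
      then show ?thesis using B0 by (simp add: b_def eta_def)
    qed
    have step: "(2 / gam) * b t - (b t)\<^sup>2 - (1 / gam\<^sup>2) * r t \<le> F (t - 1) - F t"
      if t: "t \<in> {1..T}" for t
    proof -
      have ct: "chat t \<in> Th" and ct1: "chat (t + 1) \<in> Th" using chTh t by auto
      have mn: "\<forall>v\<in>Th. anorm_sq n (A t) (vsub (vsub (chat t) (vscale (1 / gam) (zf t))) (chat (t + 1)))
             \<le> anorm_sq n (A t) (vsub (vsub (chat t) (vscale (1 / gam) (zf t))) v)" using zf t by blast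
      have os: "anorm_sq n (A t) (vsub (chat (t + 1)) cstar) \<le> anorm_sq n (A t) (vsub (chat t) cstar)
          - (2 / gam) * ip n (G t) (vsub (chat t) cstar) + (1 / gam\<^sup>2) * ip n (G t) (zf t)"
        unfolding A_def
        by (rule ons_step[OF ons_symm ons_psd cvx ct1 cs _ gam0])
          (use eps0 zeq[OF t] mn A_def in auto)
      have ipg: "ip n (G t) (vsub (chat t) cstar) = b t"
        unfolding Gd ip_vscale_left b_def a_def by (simp add: ip_comm)
      have qs: "anorm_sq n (A t) (vsub (chat t) cstar) = F (t - 1) + (b t)\<^sup>2"
      proof -
        have "anorm_sq n (A t) (vsub (chat t) cstar) = anorm_sq n (A (t - 1)) (vsub (chat t) cstar)
            + (ip n (G t) (vsub (chat t) cstar))\<^sup>2"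
          unfolding A_def using t by (intro ons_quad_step) auto
        moreover have "Suc (t - 1) = t" using t by auto
        ultimately show ?thesis unfolding F_def ipg by simp
      qed
      have "F t = anorm_sq n (A t) (vsub (chat (t + 1)) cstar)" by (simp add: F_def)
      then show ?thesis using os ipg qs unfolding r_def by simp
    qed
    have S1: "(\<Sum>t\<in>{1..T}. (2 / gam) * b t - (b t)\<^sup>2 - (1 / gam\<^sup>2) * r t) \<le> F 0 - F T"
      by (rule tele) (rule step)
    have F0: "F 0 \<le> eps * D\<^sup>2"
    proof -
      have "F 0 = eps * ip n (vsub (chat 1) cstar) (vsub (chat 1) cstar)"
        unfolding F_def A_def ons_quad by simp
      moreover have "ip n (vsub (chat 1) cstar) (vsub (chat 1) cstar) \<le> D\<^sup>2"
        using diamTh ONS cs unfolding diam_le_def by (intro ip_le_sq) blast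
      ultimately show ?thesis using eps0 by (simp add: mult_left_mono)
    qed
    have FT: "0 \<le> F T" unfolding F_def A_def using eps0 by (intro ons_psd) simp
    have lb: "(1 / gam) * b t \<le> (2 / gam) * b t - (b t)\<^sup>2" if t: "t \<in> {1..T}" for t
    proof -
      have "(b t)\<^sup>2 \<le> (1 / gam) * b t"
        using bb[OF t] unfolding power2_eq_square gam_def
        by (intro mult_right_mono) auto
      then show ?thesis by simp
    qed
    have "(\<Sum>t\<in>{1..T}. (1 / gam) * b t - (1 / gam\<^sup>2) * r t)
        \<le> (\<Sum>t\<in>{1..T}. (2 / gam) * b t - (b t)\<^sup>2 - (1 / gam\<^sup>2) * r t)"
      using lb by (intro sum_mono) auto
    also have "\<dots> \<le> eps * D\<^sup>2" using S1 F0 FT by simp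
    finally have S2: "(1 / gam) * (\<Sum>t\<in>{1..T}. b t) - (1 / gam\<^sup>2) * (\<Sum>t\<in>{1..T}. r t) \<le> eps * D\<^sup>2"
      by (simp add: sum_subtractf sum_distrib_left)
    have epsD: "gam * (eps * D\<^sup>2) = real n / gam"
      unfolding eps_def using D0 gam0 by (simp add: field_simps power2_eq_square)
    have Sb: "(\<Sum>t\<in>{1..T}. b t) \<le> (real n + (\<Sum>t\<in>{1..T}. r t)) / gam"
    proof -
      have "(1 / gam) * (\<Sum>t\<in>{1..T}. b t) \<le> eps * D\<^sup>2 + (1 / gam\<^sup>2) * (\<Sum>t\<in>{1..T}. r t)"
        using S2 by simp
      then have "gam * ((1 / gam) * (\<Sum>t\<in>{1..T}. b t)) \<le> gam * (eps * D\<^sup>2 + (1 / gam\<^sup>2) * (\<Sum>t\<in>{1..T}. r t))"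
        using gam0 by (intro mult_left_mono) auto
      moreover have "gam * ((1 / gam) * (\<Sum>t\<in>{1..T}. b t)) = (\<Sum>t\<in>{1..T}. b t)" using gam0 by simp
      moreover have "gam * (eps * D\<^sup>2 + (1 / gam\<^sup>2) * (\<Sum>t\<in>{1..T}. r t)) = real n / gam + (\<Sum>t\<in>{1..T}. r t) / gam"
        using gam0 epsD by (simp add: distrib_left power2_eq_square)
      ultimately show ?thesis by (simp add: add_divide_distrib)
    qed
    define M where "M = (\<lambda>t. det (Mt n eps G t))"
    have Mpos: "0 < M t" for t unfolding M_def using det_Mt_pos_le[OF eps0] by blast
    have rstep: "r t \<le> (- ln (M (t - 1))) - (- ln (M t))" if t: "t \<in> {1..T}" for t
    proof -
      have e: "M (t - 1) = (1 - r t) * M t"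
        unfolding M_def r_def using t zeq[OF t] by (intro det_step) (auto simp: A_def)
      then have "1 - r t = M (t - 1) / M t" using Mpos[of t] by simp
      then have pos: "0 < 1 - r t" using Mpos[of t] Mpos[of "t - 1"] by simp
      have "ln (M (t - 1)) = ln (1 - r t) + ln (M t)"
        using e pos Mpos[of t] by (simp add: ln_mult)
      moreover have "ln (1 - r t) \<le> (1 - r t) - 1" using pos by (rule ln_le_minus_one)
      ultimately show ?thesis by simp
    qed
    have Sr1: "(\<Sum>t\<in>{1..T}. r t) \<le> ln (M T) - ln (M 0)"
      using tele[of T r "\<lambda>t. - ln (M t)"] rstep by simp
    have M0: "ln (M 0) = real n * ln eps"
      unfolding M_def det_M0 using eps0 by (simp add: ln_realpow)
    have diagpos: "0 < A T i i" for i
    proof -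
      have "0 \<le> (\<Sum>s\<in>{1..T}. G s i * G s i)" by (auto intro: sum_nonneg)
      then show ?thesis using eps0 by (simp add: A_def ons_matrix_def)
    qed
    have "M T \<le> (\<Prod>i<n. A T i i)" unfolding M_def A_def using det_Mt_pos_le[OF eps0] by blast
    then have "ln (M T) \<le> ln (\<Prod>i<n. A T i i)" using Mpos[of T] by simp
    also have "\<dots> = (\<Sum>i<n. ln (A T i i))" using diagpos by (subst ln_prod) (auto simp: less_imp_neq[symmetric])
    also have "\<dots> \<le> real n * ln ((\<Sum>i<n. A T i i) / real n)"
      using diagpos n1 by (intro sum_ln_le) auto
    finally have lnMT: "ln (M T) \<le> real n * ln ((\<Sum>i<n. A T i i) / real n)" .
    have trace: "(\<Sum>i<n. A T i i) \<le> real n * eps + real T * (eta\<^sup>2 * K\<^sup>2)"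
    proof -
      have "(\<Sum>i<n. A T i i) = real n * eps + (\<Sum>s\<in>{1..T}. ip n (G s) (G s))"
        unfolding A_def by (rule ons_diag_sum)
      also have "(\<Sum>s\<in>{1..T}. ip n (G s) (G s)) \<le> (\<Sum>s\<in>{1..T}. eta\<^sup>2 * K\<^sup>2)"
      proof (intro sum_mono)
        fix s assume s: "s \<in> {1..T}"
        have "ip n (G s) (G s) = eta\<^sup>2 * ip n (d s) (d s)"
          unfolding Gd ip_vscale_left by (subst ip_comm) (simp add: ip_vscale_left power2_eq_square)
        also have "\<dots> \<le> eta\<^sup>2 * K\<^sup>2" using rf[OF s] by (intro mult_left_mono) auto
        finally show "ip n (G s) (G s) \<le> eta\<^sup>2 * K\<^sup>2" .
      qed
      finally show ?thesis by simp
    qed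
    define q where "q = real T * eta\<^sup>2 * K\<^sup>2 / (real n * eps)"
    have q0: "0 \<le> q" unfolding q_def using eps0 by simp
    have "eps * (1 + q) = (real n * eps + real T * (eta\<^sup>2 * K\<^sup>2)) / real n"
      using n1 eps0 unfolding q_def by (simp add: field_simps)
    then have "(\<Sum>i<n. A T i i) / real n \<le> eps * (1 + q)"
      using trace n1 by (simp add: divide_right_mono)
    moreover have "0 < (\<Sum>i<n. A T i i) / real n" using diagpos n1 by (auto intro!: sum_pos divide_pos_pos simp: lessThan_empty_iff)
    ultimately have "ln ((\<Sum>i<n. A T i i) / real n) \<le> ln (eps * (1 + q))" by simp
    also have "\<dots> = ln eps + ln (1 + q)" using eps0 q0 by (simp add: ln_mult)
    finally have "ln (M T) \<le> real n * (ln eps + ln (1 + q))"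
      using lnMT n1 by (meson mult_left_mono of_nat_0_le_iff order_trans)
    then have Sr: "(\<Sum>t\<in>{1..T}. r t) \<le> real n * ln (1 + q)"
      using Sr1 M0 by (simp add: algebra_simps)
    define Zv where "Zv = D * K * real T / (B * real n)"
    have Zpos: "0 < Zv" unfolding Zv_def using D0 K0 B0 n1 T1 by simp
    have lnZ: "1 \<le> ln Zv" using Z Zpos unfolding Zv_def[symmetric] by (simp add: ln_ge_iff)
    have Z1: "1 \<le> Zv" using lnZ Zpos by (metis exp_ge_add_one_self exp_ln add.commute add_le_cancel_left dual_order.trans le_add_same_cancel1 zero_le_one)
    have qZ: "q = (gam\<^sup>2 / 25) * (Zv\<^sup>2 / real T)"
      unfolding q_def Zv_def eps_def eta_def using D0 K0 B0 n1 T1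
      by (simp add: field_simps power2_eq_square)
    have "q \<le> Zv\<^sup>2"
    proof -
      have "1 * Zv\<^sup>2 \<le> real T * Zv\<^sup>2" using T1 by (intro mult_right_mono) auto
      then have "Zv\<^sup>2 / real T \<le> Zv\<^sup>2" using T1 by (simp add: divide_le_eq mult.commute)
      moreover have "gam\<^sup>2 / 25 \<le> 1" by (simp add: gam_def power2_eq_square)
      ultimately show ?thesis unfolding qZ
        by (metis (no_types) divide_nonneg_nonneg mult_le_one mult_right_mono mult.left_neutral
            of_nat_0_le_iff order_trans zero_le_power2 gam0 less_imp_le)
    qed
    moreover have "1 \<le> Zv * Zv" using Z1 mult_mono[of 1 Zv 1 Zv] by simp
    ultimately have "1 + q \<le> 2 * Zv\<^sup>2" by (simp add: power2_eq_square)
    then have "ln (1 + q) \<le> ln (2 * Zv\<^sup>2)" using q0 by (intro ln_mono) auto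
    also have "\<dots> = ln 2 + 2 * ln Zv" using Zpos by (simp add: ln_mult ln_realpow)
    also have "ln 2 \<le> (1::real)" using ln_le_minus_one[of 2] by simp
    then have "ln 2 + 2 * ln Zv \<le> 3 * ln Zv" using lnZ by simp
    finally have lnq: "ln (1 + q) \<le> 3 * ln Zv" by simp
    have "(\<Sum>t\<in>{1..T}. a t) = 5 * B * (\<Sum>t\<in>{1..T}. b t)"
      unfolding b_def eta_def using B0 by (simp add: sum_distrib_left)
    also have "\<dots> \<le> 5 * B * ((real n + real n * ln (1 + q)) / gam)"
    proof (intro mult_left_mono)
      have "(real n + (\<Sum>t\<in>{1..T}. r t)) / gam \<le> (real n + real n * ln (1 + q)) / gam"
        using Sr gam0 by (intro divide_right_mono) auto
      then show "(\<Sum>t\<in>{1..T}. b t) \<le> (real n + real n * ln (1 + q)) / gam" using Sb by linarith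
    qed (use B0 in auto)
    also have "\<dots> \<le> 5 * B * ((real n * (4 * ln Zv)) / gam)"
    proof (intro mult_left_mono divide_right_mono)
      have "real n * (1 + ln (1 + q)) \<le> real n * (4 * ln Zv)"
        using lnq lnZ by (intro mult_left_mono) auto
      then show "real n + real n * ln (1 + q) \<le> real n * (4 * ln Zv)" by (simp add: algebra_simps)
    qed (use B0 gam0 in auto)
    also have "\<dots> = (5 * 4 * 49 / 25) * (B * real n * ln Zv)" by (simp add: gam_def)
    also have "\<dots> \<le> 40 * (B * real n * ln Zv)"
      using B0 lnZ by (intro mult_right_mono) auto
    finally show ?thesis by (simp add: Zv_def mult.assoc)
  qed
  show ?thesis using part1 part2 aeq by simp
qed

theorem theorem1:
  shows "\<exists>C::real. C > 0 \<and>
    (\<forall>(n::nat) (T::nat) (\<Theta>::(nat \<Rightarrow> real) set) (cstar::nat \<Rightarrow> real)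
       (X::nat \<Rightarrow> (nat \<Rightarrow> real) set) (x::nat \<Rightarrow> (nat \<Rightarrow> real))
       (D::real) (K::real) (B::real)
       (chat::nat \<Rightarrow> (nat \<Rightarrow> real)) (xhat::nat \<Rightarrow> (nat \<Rightarrow> real)).
       n \<ge> 1 \<and> T \<ge> 1 \<and>
       \<Theta> \<subseteq> Rn n \<and> closed \<Theta> \<and> convex_n \<Theta> \<and> cstar \<in> \<Theta> \<and>
       D > 0 \<and> K > 0 \<and> B > 0 \<and>
       diam_le n \<Theta> D \<and>
       (\<forall>t\<in>{1..T}. X t \<subseteq> Rn n \<and> X t \<noteq> {} \<and> compact (X t) \<and>
          diam_le n (X t) K \<and> is_argmax n cstar (X t) (x t) \<and>
          (\<forall>c\<in>\<Theta>. \<forall>c'\<in>\<Theta>. \<forall>y\<in>X t. \<forall>y'\<in>X t. ip n (vsub c c') (vsub y y') \<le> B)) \<and>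
       (\<forall>t\<in>{1..T}. is_argmax n (chat t) (X t) (xhat t)) \<and>
       is_ONS_run n \<Theta> D (25 / 49)
         (\<lambda>t. surr_grad n (1 / (5 * B)) (chat t) (xhat t) (x t)) T chat
     \<longrightarrow>
       (\<Sum>t\<in>{1..T}. ip n cstar (vsub (x t) (xhat t)))
          \<le> (\<Sum>t\<in>{1..T}. ip n (vsub (chat t) cstar) (vsub (xhat t) (x t))) \<and>
       (exp 1 \<le> D * K * real T / (B * real n) \<longrightarrow>
          (\<Sum>t\<in>{1..T}. ip n (vsub (chat t) cstar) (vsub (xhat t) (x t)))
            \<le> C * B * real n * ln (D * K * real T / (B * real n))))"
    apply (rule exI[of _ "40::real"])
  apply (rule conjI)
   apply simp
  apply (intro allI impI)
  apply (elim conjE)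
  apply (rule main_lemma)
                apply assumption+
  done

end
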